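(* Let $\Gamma$ be a group and $\omega:\Gamma\times\Gamma\to\Gamma$ a group morphism. Then $R(\omega):K(\omega)\to K(\omega)^2$ is a group isomorphism satisfying $\mathrm{ev}_\epsilon=\omega\circ(\mathrm{ev}_\epsilon\times\mathrm{ev}_\epsilon)\circ R(\omega)$, and it is universal with this property: for every group $\widetilde K$, every group isomorphism $\widetilde R:\widetilde K\to\widetilde K^2$ and every group morphism $p:\widetilde K\to\Gamma$ with $p=\omega\circ(p\times p)\circ\widetilde R$, there is a unique group morphism $\psi:\widetilde K\to K(\omega)$ with $\mathrm{ev}_\epsilon\circ\psi=p$ and $R(\omega)\circ\psi=(\psi\times\psi)\circ\widetilde R$.
   Context: $\{0,1\}^*$ denotes the finite words over $\{0,1\}$ with empty word $\epsilon$. $K(\omega)$ is the subgroup of $\prod_{u\in\{0,1\}^*}\Gamma$ (pointwise product) of maps $a:\{0,1\}^*\to\Gamma$ with $a(u)=\omega(a(u0),a(u1))$ for all $u$. $R(\omega)(a):=(R_0(a),R_1(a))$ where $R_i(a)(u):=a(iu)$. $\mathrm{ev}_\epsilon:K(\omega)\to\Gamma$, $a\mapsto a(\epsilon)$. *)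

theory Defs
  imports "HOL-Algebra.Algebra"
begin

text \<open>Words in {0,1}^* are modelled as bool lists, with False = 0 and True = 1.
  The word u0 is u @ [False], the word 0u is False # u; the empty word is [].\<close>

definition Komega :: "('g, 'm) monoid_scheme \<Rightarrow> ('g \<times> 'g \<Rightarrow> 'g) \<Rightarrow> (bool list \<Rightarrow> 'g) monoid" where
  "Komega G \<omega> = \<lparr> carrier = {a. (\<forall>u. a u \<in> carrier G) \<and>
                                  (\<forall>u. a u = \<omega> (a (u @ [False]), a (u @ [True])))},
                   monoid.mult = (\<lambda>a b u. a u \<otimes>\<^bsub>G\<^esub> b u),
                   one = (\<lambda>u. \<one>\<^bsub>G\<^esub>) \<rparr>"

definition Romega :: "(bool list \<Rightarrow> 'g) \<Rightarrow> (bool list \<Rightarrow> 'g) \<times> (bool list \<Rightarrow> 'g)" where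
  "Romega a = ((\<lambda>u. a (False # u)), (\<lambda>u. a (True # u)))"

definition ev_eps :: "(bool list \<Rightarrow> 'g) \<Rightarrow> 'g" where
  "ev_eps a = a []"

end

theory Submission
  imports Defs
begin

fun walk :: "('k \<Rightarrow> 'k \<times> 'k) \<Rightarrow> bool list \<Rightarrow> 'k \<Rightarrow> 'k" where
  "walk Rt [] x = x"
| "walk Rt (b # u) x = walk Rt u (if b then snd (Rt x) else fst (Rt x))"

lemma walk_snoc: "walk Rt (u @ [b]) x = (if b then snd (Rt (walk Rt u x)) else fst (Rt (walk Rt u x)))"
  by (induction u arbitrary: x) auto

lemma walk_closed:
  assumes "Rt \<in> hom Kt (Kt \<times>\<times> Kt)"
  shows "x \<in> carrier Kt \<Longrightarrow> walk Rt u x \<in> carrier Kt"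
proof (induction u arbitrary: x)
  case Nil then show ?case by simp
next
  case (Cons b u)
  have "Rt x \<in> carrier Kt \<times> carrier Kt" using hom_in_carrier[OF assms Cons.prems] by simp
  then show ?case using Cons.IH by (auto simp: mem_Times_iff)
qed

lemma walk_mult:
  assumes "Rt \<in> hom Kt (Kt \<times>\<times> Kt)"
  shows "x \<in> carrier Kt \<Longrightarrow> y \<in> carrier Kt \<Longrightarrow>
     walk Rt u (x \<otimes>\<^bsub>Kt\<^esub> y) = walk Rt u x \<otimes>\<^bsub>Kt\<^esub> walk Rt u y"
proof (induction u arbitrary: x y)
  case Nil then show ?case by simp
next
  case (Cons b u)
  have cx: "Rt x \<in> carrier Kt \<times> carrier Kt" "Rt y \<in> carrier Kt \<times> carrier Kt"
    using hom_in_carrier[OF assms Cons.prems(1)] hom_in_carrier[OF assms Cons.prems(2)] by simp_all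
  have m: "Rt (x \<otimes>\<^bsub>Kt\<^esub> y) = Rt x \<otimes>\<^bsub>Kt \<times>\<times> Kt\<^esub> Rt y"
    using hom_mult[OF assms Cons.prems] .
  show ?case using cx Cons.IH unfolding walk.simps m mult_DirProd' by (auto simp: mem_Times_iff)
qed

lemma mem_Komega: "a \<in> carrier (Komega G \<omega>) \<longleftrightarrow>
  (\<forall>u. a u \<in> carrier G) \<and> (\<forall>u. a u = \<omega> (a (u @ [False]), a (u @ [True])))"
  by (simp add: Komega_def)

theorem mainTheorem11:
  fixes G :: "('g, 'm) monoid_scheme"
    and \<omega> :: "'g \<times> 'g \<Rightarrow> 'g"
  assumes "group G"
    and "\<omega> \<in> hom (G \<times>\<times> G) G"
  shows "Romega \<in> iso (Komega G \<omega>) (Komega G \<omega> \<times>\<times> Komega G \<omega>)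
    \<and> (\<forall>a \<in> carrier (Komega G \<omega>).
          ev_eps a = \<omega> (ev_eps (fst (Romega a)), ev_eps (snd (Romega a))))
    \<and> (\<forall>(Kt :: ('k, 'n) monoid_scheme) Rt p.
          group Kt \<longrightarrow> Rt \<in> iso Kt (Kt \<times>\<times> Kt) \<longrightarrow> p \<in> hom Kt G \<longrightarrow>
          (\<forall>x \<in> carrier Kt. p x = \<omega> (p (fst (Rt x)), p (snd (Rt x)))) \<longrightarrow>
          (\<exists>\<psi>. \<psi> \<in> hom Kt (Komega G \<omega>)
               \<and> (\<forall>x \<in> carrier Kt. ev_eps (\<psi> x) = p x)
               \<and> (\<forall>x \<in> carrier Kt. Romega (\<psi> x) = (\<psi> (fst (Rt x)), \<psi> (snd (Rt x))))
               \<and> (\<forall>\<psi>'. \<psi>' \<in> hom Kt (Komega G \<omega>)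
                      \<and> (\<forall>x \<in> carrier Kt. ev_eps (\<psi>' x) = p x)
                      \<and> (\<forall>x \<in> carrier Kt. Romega (\<psi>' x) = (\<psi>' (fst (Rt x)), \<psi>' (snd (Rt x))))
                      \<longrightarrow> (\<forall>x \<in> carrier Kt. \<psi>' x = \<psi> x))))"
proof (intro conjI ballI allI impI)
  have wc: "\<omega> (x, y) \<in> carrier G" if "x \<in> carrier G" "y \<in> carrier G" for x y
    using hom_in_carrier[OF assms(2), of "(x,y)"] that by simp
  let ?K = "Komega G \<omega>"
  have hom: "Romega \<in> hom ?K (?K \<times>\<times> ?K)"
  proof (rule homI)
    fix a assume "a \<in> carrier ?K"
    then have a1: "\<forall>u. a u \<in> carrier G" and a2: "\<forall>u. a u = \<omega> (a (u @ [False]), a (u @ [True]))"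
      unfolding mem_Komega by blast+
    have "a (d # u) = \<omega> (a (d # u @ [False]), a (d # u @ [True]))" for d u
      using a2[rule_format, of "d # u"] by simp
    then show "Romega a \<in> carrier (?K \<times>\<times> ?K)"
      using a1 unfolding Romega_def carrier_DirProd mem_Times_iff fst_conv snd_conv mem_Komega
      by blast
  next
    fix a b assume "a \<in> carrier ?K" "b \<in> carrier ?K"
    show "Romega (a \<otimes>\<^bsub>?K\<^esub> b) = Romega a \<otimes>\<^bsub>?K \<times>\<times> ?K\<^esub> Romega b"
      by (simp add: Komega_def Romega_def)
  qed
  have inj: "inj_on Romega (carrier ?K)"
  proof (rule inj_onI)
    fix a b assume a: "a \<in> carrier ?K" and b: "b \<in> carrier ?K" and e: "Romega a = Romega b"
    have h: "a (c # u) = b (c # u)" for c u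
      using e by (cases c) (auto simp: Romega_def fun_eq_iff)
    show "a = b"
    proof
      fix u show "a u = b u"
      proof (cases u)
        case Nil
        have "a [] = \<omega> (a [False], a [True])" "b [] = \<omega> (b [False], b [True])"
          using a b unfolding mem_Komega by (metis append_Nil)+
        then show ?thesis using h Nil by simp
      qed (use h in simp)
    qed
  qed
  have surj: "Romega ` carrier ?K = carrier (?K \<times>\<times> ?K)"
  proof
    show "Romega ` carrier ?K \<subseteq> carrier (?K \<times>\<times> ?K)" using hom_in_carrier[OF hom] by blast
  next
    show "carrier (?K \<times>\<times> ?K) \<subseteq> Romega ` carrier ?K"
    proof
      fix bc assume bc: "bc \<in> carrier (?K \<times>\<times> ?K)"
      obtain b c where bcd: "bc = (b, c)" by fastforce
      have b: "b \<in> carrier ?K" and c: "c \<in> carrier ?K" using bc bcd by auto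
      define a where "a u = (case u of [] \<Rightarrow> \<omega> (b [], c []) | d # v \<Rightarrow> if d then c v else b v)" for u
      have b1: "\<forall>u. b u \<in> carrier G" and b2: "\<forall>u. b u = \<omega> (b (u @ [False]), b (u @ [True]))"
        using b unfolding mem_Komega by blast+
      have c1: "\<forall>u. c u \<in> carrier G" and c2: "\<forall>u. c u = \<omega> (c (u @ [False]), c (u @ [True]))"
        using c unfolding mem_Komega by blast+
      have "a u \<in> carrier G \<and> a u = \<omega> (a (u @ [False]), a (u @ [True]))" for u
      proof (cases u)
        case Nil then show ?thesis using b1 c1 wc by (simp add: a_def)
      next
        case (Cons d v)
        have e1: "a (d # v) = (if d then c v else b v)" by (simp add: a_def)
        have e2: "a (d # v @ [e]) = (if d then c (v @ [e]) else b (v @ [e]))" for e by (simp add: a_def)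
        have bb: "b v \<in> carrier G \<and> b v = \<omega> (b (v @ [False]), b (v @ [True]))" using b1 b2 by blast
        have cc: "c v \<in> carrier G \<and> c v = \<omega> (c (v @ [False]), c (v @ [True]))" using c1 c2 by blast
        show ?thesis unfolding Cons append_Cons e1 e2
          by (cases d) (simp_all only: if_True if_False bb cc simp_thms wc b1 c1)
      qed
      then have "a \<in> carrier ?K" unfolding mem_Komega by blast
      moreover have "Romega a = bc" by (simp add: Romega_def a_def bcd)
      ultimately show "bc \<in> Romega ` carrier ?K" by blast
    qed
  qed
  show "Romega \<in> iso ?K (?K \<times>\<times> ?K)"
    using hom inj surj by (simp add: iso_def bij_betw_def)
next
  fix a assume "a \<in> carrier (Komega G \<omega>)"
  then have "a [] = \<omega> (a ([] @ [False]), a ([] @ [True]))" unfolding mem_Komega by blast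
  then show "ev_eps a = \<omega> (ev_eps (fst (Romega a)), ev_eps (snd (Romega a)))"
    unfolding ev_eps_def Romega_def fst_conv snd_conv append_Nil .
next
  fix Kt :: "('k, 'n) monoid_scheme" and Rt p
  assume gK: "group Kt" and Rt: "Rt \<in> iso Kt (Kt \<times>\<times> Kt)" and p: "p \<in> hom Kt G"
    and pw: "\<forall>x \<in> carrier Kt. p x = \<omega> (p (fst (Rt x)), p (snd (Rt x)))"
  have Rh: "Rt \<in> hom Kt (Kt \<times>\<times> Kt)" using Rt by (simp add: iso_def)
  have Rc: "Rt x \<in> carrier Kt \<times> carrier Kt" if "x \<in> carrier Kt" for x
    using hom_in_carrier[OF Rh that] by simp
  define \<psi> where "\<psi> x u = p (walk Rt u x)" for x u
  have pc: "p y \<in> carrier G" if "y \<in> carrier Kt" for y using hom_in_carrier[OF p that] .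
  have "\<psi> \<in> hom Kt (Komega G \<omega>)"
  proof (rule homI)
    fix x assume x: "x \<in> carrier Kt"
    have "\<psi> x u \<in> carrier G" for u
      unfolding \<psi>_def using pc walk_closed[OF Rh x] by blast
    moreover have "\<psi> x u = \<omega> (\<psi> x (u @ [False]), \<psi> x (u @ [True]))" for u
      unfolding \<psi>_def walk_snoc using pw walk_closed[OF Rh x] by (simp only: if_True if_False)
    ultimately show "\<psi> x \<in> carrier (Komega G \<omega>)" unfolding mem_Komega by blast
  next
    fix x y assume x: "x \<in> carrier Kt" and y: "y \<in> carrier Kt"
    show "\<psi> (x \<otimes>\<^bsub>Kt\<^esub> y) = \<psi> x \<otimes>\<^bsub>Komega G \<omega>\<^esub> \<psi> y"
      unfolding Komega_def \<psi>_def
      using walk_mult[OF Rh x y] hom_mult[OF p] walk_closed[OF Rh x] walk_closed[OF Rh y]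
      by (simp add: fun_eq_iff)
  qed
  moreover have "\<forall>x \<in> carrier Kt. ev_eps (\<psi> x) = p x"
    by (simp add: \<psi>_def ev_eps_def)
  moreover have "\<forall>x \<in> carrier Kt. Romega (\<psi> x) = (\<psi> (fst (Rt x)), \<psi> (snd (Rt x)))"
    by (simp add: \<psi>_def Romega_def fun_eq_iff)
  moreover have "\<forall>\<psi>'. \<psi>' \<in> hom Kt (Komega G \<omega>)
                      \<and> (\<forall>x \<in> carrier Kt. ev_eps (\<psi>' x) = p x)
                      \<and> (\<forall>x \<in> carrier Kt. Romega (\<psi>' x) = (\<psi>' (fst (Rt x)), \<psi>' (snd (Rt x))))
                      \<longrightarrow> (\<forall>x \<in> carrier Kt. \<psi>' x = \<psi> x)"
  proof (intro allI impI ballI)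
    fix \<psi>' x assume H: "\<psi>' \<in> hom Kt (Komega G \<omega>)
                      \<and> (\<forall>x \<in> carrier Kt. ev_eps (\<psi>' x) = p x)
                      \<and> (\<forall>x \<in> carrier Kt. Romega (\<psi>' x) = (\<psi>' (fst (Rt x)), \<psi>' (snd (Rt x))))"
      and x: "x \<in> carrier Kt"
    have "\<psi>' x u = \<psi> x u" for u
      using x
    proof (induction u arbitrary: x)
      case Nil then show ?case using H by (simp add: \<psi>_def ev_eps_def)
    next
      case (Cons d u)
      have R: "Romega (\<psi>' x) = (\<psi>' (fst (Rt x)), \<psi>' (snd (Rt x)))" using H Cons.prems by blast
      have "fst (Rt x) \<in> carrier Kt" "snd (Rt x) \<in> carrier Kt" using Rc[OF Cons.prems] by auto
      then show ?case using R Cons.IH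
        by (cases d) (auto simp: Romega_def fun_eq_iff \<psi>_def)
    qed
    then show "\<psi>' x = \<psi> x" by blast
  qed
  ultimately show "\<exists>\<psi>. \<psi> \<in> hom Kt (Komega G \<omega>)
               \<and> (\<forall>x \<in> carrier Kt. ev_eps (\<psi> x) = p x)
               \<and> (\<forall>x \<in> carrier Kt. Romega (\<psi> x) = (\<psi> (fst (Rt x)), \<psi> (snd (Rt x))))
               \<and> (\<forall>\<psi>'. \<psi>' \<in> hom Kt (Komega G \<omega>)
                      \<and> (\<forall>x \<in> carrier Kt. ev_eps (\<psi>' x) = p x)
                      \<and> (\<forall>x \<in> carrier Kt. Romega (\<psi>' x) = (\<psi>' (fst (Rt x)), \<psi>' (snd (Rt x))))
                      \<longrightarrow> (\<forall>x \<in> carrier Kt. \<psi>' x = \<psi> x))" by blast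
qed

end
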